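(* For all integers $0\le k\le j$, $$\sum_{h=k}^j(-q)^ha^hq^{k^2-2jh}{h\brack k}_+\,a^{-j+h}q^{(j-h)^2}{j\brack h}_+\frac{(a^2q^{2-2j};q^2)_{j-h}}{(q^2;q^2)_{j-h}}=(-q)^ka^{2k-j}q^{-4kj+2k^2+j^2}{j\brack k}_+\frac{(a^2q^{2-4j+2k};q^2)_{j-k}}{(q^2;q^2)_{j-k}}.$$
   Context: $(x;q^2)_n=\prod_{i=0}^{n-1}(1-xq^{2i})$, $(q^2;q^2)_n=\prod_{i=1}^n(1-q^{2i})$, and ${N\brack k}_+=\frac{(q^2;q^2)_N}{(q^2;q^2)_k(q^2;q^2)_{N-k}}$. (The identity expresses the reduced North–South closure of a top twist applied to the basis web $RI[j,k]$.) *)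

theory Defs
  imports Complex_Main
begin

definition qpoch2 :: "'a::field \<Rightarrow> 'a \<Rightarrow> nat \<Rightarrow> 'a" where
  "qpoch2 x q n = (\<Prod>i<n. (1 - x * q ^ (2 * i)))"

definition qfac2 :: "'a::field \<Rightarrow> nat \<Rightarrow> 'a" where
  "qfac2 q n = (\<Prod>i\<in>{1..n}. (1 - q ^ (2 * i)))"

definition qbinp :: "'a::field \<Rightarrow> nat \<Rightarrow> nat \<Rightarrow> 'a" where
  "qbinp q N k = qfac2 q N / (qfac2 q k * qfac2 q (N - k))"

end

theory Submission imports Defs begin


fun gb :: "'a::comm_ring_1 \<Rightarrow> nat \<Rightarrow> nat \<Rightarrow> 'a" where
  "gb Q 0 k = (if k = 0 then 1 else 0)"
| "gb Q (Suc n) 0 = 1"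
| "gb Q (Suc n) (Suc k) = gb Q n (Suc k) + Q ^ (n - k) * gb Q n k"

definition pc :: "'a::comm_ring_1 \<Rightarrow> 'a \<Rightarrow> nat \<Rightarrow> 'a" where
  "pc x Q n = (\<Prod>i<n. (1 - x * Q ^ i))"

definition qf :: "'a::comm_ring_1 \<Rightarrow> nat \<Rightarrow> 'a" where
  "qf Q n = (\<Prod>i\<in>{1..n}. (1 - Q ^ i))"

lemma pc_Suc: "pc x Q (Suc n) = pc x Q n * (1 - x * Q ^ n)"
  by (simp add: pc_def)

lemma qf_Suc: "qf Q (Suc n) = qf Q n * (1 - Q ^ Suc n)"
  by (simp add: qf_def prod.nat_ivl_Suc' mult.commute)

lemma qf_0[simp]: "qf Q 0 = 1" by (simp add: qf_def)
lemma pc_0[simp]: "pc x Q 0 = 1" by (simp add: pc_def)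

lemma gb_0[simp]: "gb Q n 0 = 1" by (cases n) auto

lemma gb_gt: "n < k \<Longrightarrow> gb Q n k = 0"
proof (induction n arbitrary: k)
  case 0 then show ?case by simp
next
  case (Suc n)
  then obtain k' where "k = Suc k'" by (cases k) auto
  with Suc show ?case by simp
qed

lemma gb_Suc: "gb Q (Suc n) k = gb Q n k + (if k = 0 then 0 else Q ^ (Suc n - k) * gb Q n (k - 1))"
proof (cases k)
  case 0 then show ?thesis by simp
next
  case (Suc k')
  show ?thesis
  proof (cases "k' \<le> n")
    case True then show ?thesis using Suc by (simp add: Suc_diff_le)
  next
    case False then show ?thesis using Suc by (simp add: gb_gt)
  qed
qed

lemma vdm: "pc (a * b) Q n = (\<Sum>k\<le>n. gb Q n k * b ^ k * pc a Q k * pc b Q (n - k))"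
proof (induction n)
  case 0 then show ?case by simp
next
  case (Suc n)
  define T where "T n k = b ^ k * pc a Q k * pc b Q (n - k)" for n k
  have pt: "T (Suc n) k + Q ^ (n - k) * T (Suc n) (Suc k) = (1 - a * b * Q ^ n) * T n k" if "k \<le> n" for k
  proof -
    have e1: "pc b Q (Suc n - k) = pc b Q (n - k) * (1 - b * Q ^ (n - k))"
      using that by (simp add: Suc_diff_le pc_Suc)
    have e2: "Q ^ (n - k) * Q ^ k = Q ^ n" using that by (simp add: power_add[symmetric])
    define X where "X = b ^ k * pc a Q k * pc b Q (n - k)"
    have t1: "T (Suc n) k = X * (1 - b * Q ^ (n - k))" unfolding T_def X_def e1 by (simp add: mult.assoc)
    have t2: "T (Suc n) (Suc k) = X * (b * (1 - a * Q ^ k))" unfolding T_def X_def by (simp add: pc_Suc mult_ac)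
    have t3: "T n k = X" unfolding T_def X_def ..
    have e3: "Q ^ (n - k) * (b * (1 - a * Q ^ k)) = b * Q ^ (n - k) - a * b * Q ^ n"
      by (simp add: algebra_simps e2[symmetric])
    have "T (Suc n) k + Q ^ (n - k) * T (Suc n) (Suc k) = X * (1 - b * Q ^ (n - k)) + X * (Q ^ (n - k) * (b * (1 - a * Q ^ k)))"
      unfolding t1 t2 by (simp add: mult_ac)
    also have "\<dots> = (1 - a * b * Q ^ n) * X" unfolding e3 by (simp add: algebra_simps)
    finally show ?thesis unfolding t3 .
  qed
  have "(\<Sum>k\<le>Suc n. gb Q (Suc n) k * T (Suc n) k)
      = (\<Sum>k\<le>Suc n. gb Q n k * T (Suc n) k)
        + (\<Sum>k\<le>Suc n. (if k = 0 then 0 else Q ^ (Suc n - k) * gb Q n (k - 1)) * T (Suc n) k)"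
    by (simp add: gb_Suc sum.distrib distrib_right)
  also have "(\<Sum>k\<le>Suc n. gb Q n k * T (Suc n) k) = (\<Sum>k\<le>n. gb Q n k * T (Suc n) k)"
    by (simp add: gb_gt)
  also have "(\<Sum>k\<le>Suc n. (if k = 0 then 0 else Q ^ (Suc n - k) * gb Q n (k - 1)) * T (Suc n) k)
      = (\<Sum>k\<le>n. Q ^ (n - k) * gb Q n k * T (Suc n) (Suc k))"
    by (subst sum.atMost_Suc_shift) simp
  also have "(\<Sum>k\<le>n. gb Q n k * T (Suc n) k) + (\<Sum>k\<le>n. Q ^ (n - k) * gb Q n k * T (Suc n) (Suc k))
      = (\<Sum>k\<le>n. gb Q n k * (T (Suc n) k + Q ^ (n - k) * T (Suc n) (Suc k)))"
    by (simp add: sum.distrib algebra_simps)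
  also have "\<dots> = (\<Sum>k\<le>n. gb Q n k * ((1 - a * b * Q ^ n) * T n k))"
    by (rule sum.cong) (auto simp: pt)
  also have "\<dots> = (1 - a * b * Q ^ n) * pc (a * b) Q n"
    by (simp add: Suc sum_distrib_left T_def algebra_simps)
  also have "\<dots> = pc (a * b) Q (Suc n)" by (simp add: pc_Suc mult.commute)
  finally show ?case by (simp add: T_def mult.assoc)
qed

lemma gb_qf: "k \<le> n \<Longrightarrow> gb Q n k * qf Q k * qf Q (n - k) = qf Q n"
proof (induction n arbitrary: k)
  case 0 then show ?case by simp
next
  case (Suc n)
  show ?case
  proof (cases k)
    case 0 then show ?thesis by simp
  next
    case (Suc k')
    have A: "gb Q n (Suc k') * qf Q (Suc k') * qf Q (n - k') = qf Q n * (1 - Q ^ (n - k'))"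
    proof (cases "Suc k' \<le> n")
      case True
      then have "qf Q (n - k') = qf Q (n - Suc k') * (1 - Q ^ (n - k'))"
        by (metis Suc_diff_Suc Suc_le_lessD diff_Suc_Suc qf_Suc)
      then show ?thesis using Suc.IH[OF True]
        by (metis (no_types, lifting) mult.assoc)
    next
      case False then have "n - k' = 0" by simp
      then show ?thesis using False by (simp add: gb_gt)
    qed
    have k'n: "k' \<le> n" using Suc Suc.prems by simp
    have B: "gb Q n k' * qf Q k' * qf Q (n - k') = qf Q n" using Suc.IH[OF k'n] .
    have e2: "Q ^ (n - k') * Q ^ Suc k' = Q ^ Suc n" using k'n
      by (metis Suc_diff_le add_Suc_right le_add_diff_inverse2 power_add)
    have "gb Q (Suc n) k * qf Q k * qf Q (Suc n - k)
        = gb Q n (Suc k') * qf Q (Suc k') * qf Q (n - k')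
          + Q ^ (n - k') * (gb Q n k' * qf Q k' * qf Q (n - k')) * (1 - Q ^ Suc k')"
      using Suc by (simp add: qf_Suc algebra_simps)
    also have "\<dots> = qf Q n * (1 - Q ^ (n - k')) + Q ^ (n - k') * qf Q n * (1 - Q ^ Suc k')"
      using A B by simp
    also have "\<dots> = qf Q n * (1 - Q ^ Suc n)" using e2 by (simp add: algebra_simps)
    finally show ?thesis by (simp add: qf_Suc)
  qed
qed



lemma scal:
  fixes a q :: "'a::field" and k m n :: nat
  assumes a: "a \<noteq> 0" and q: "q \<noteq> 0" and mn: "m \<le> n"
  shows "(-q) ^ (k+m) * a ^ (k+m) * power_int q (int k ^ 2 - 2 * int (k+n) * int (k+m))
          * power_int a (int (k+m) - int (k+n)) * q ^ ((n - m) ^ 2)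
       = (-q) ^ k * power_int a (2 * int k - int (k+n))
           * power_int q (- 4 * int k * int (k+n) + 2 * int k ^ 2 + int (k+n) ^ 2)
         * (a ^ 2 * power_int q (2 - 2 * int (k+n))) ^ m * ((-1) ^ m * power_int q (int m * (int m - 1) - 2 * int n * int m))"
proof -
  obtain d where n: "n = m + d" using mn le_Suc_ex by blast
  have pq: "\<And>u v. power_int q u * power_int q v = power_int q (u + v)" using q by (simp add: power_int_add)
  have pa: "\<And>u v. power_int a u * power_int a v = power_int a (u + v)" using a by (simp add: power_int_add)
  have L: "(-q) ^ (k+m) * a ^ (k+m) * power_int q (int k ^ 2 - 2 * int (k+n) * int (k+m))
          * power_int a (int (k+m) - int (k+n)) * q ^ ((n - m) ^ 2)
     = (-1) ^ (k+m) * (power_int a (int (k+m)) * power_int a (int (k+m) - int (k+n)))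
       * (power_int q (int (k+m)) * power_int q (int k ^ 2 - 2 * int (k+n) * int (k+m)) * power_int q (int d ^ 2))"
    unfolding n power_minus[of q] by (simp add: power_int_of_nat[of q, symmetric] power_int_of_nat[of a, symmetric] mult_ac)
  have h1: "(a ^ 2 * power_int q (2 - 2 * int (k+n))) ^ m = power_int a (2 * int m) * power_int q ((2 - 2 * int (k+n)) * int m)"
  proof -
    have "a ^ (2 * m) = power_int a (int (2 * m))" by (rule power_int_of_nat[symmetric])
    then have "(a ^ 2) ^ m = power_int a (2 * int m)" by (simp add: power_mult del: power_int_of_nat)
    then show ?thesis by (simp add: power_mult_distrib power_int_power' del: power_int_of_nat)
  qed
  have R: "(-q) ^ k * power_int a (2 * int k - int (k+n))
           * power_int q (- 4 * int k * int (k+n) + 2 * int k ^ 2 + int (k+n) ^ 2)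
         * (a ^ 2 * power_int q (2 - 2 * int (k+n))) ^ m * ((-1) ^ m * power_int q (int m * (int m - 1) - 2 * int n * int m))
     = (-1) ^ (k+m) * (power_int a (2 * int k - int (k+n)) * power_int a (2 * int m))
       * (power_int q (int k) * power_int q (- 4 * int k * int (k+n) + 2 * int k ^ 2 + int (k+n) ^ 2)
          * power_int q ((2 - 2 * int (k+n)) * int m) * power_int q (int m * (int m - 1) - 2 * int n * int m))"
    unfolding h1 power_minus[of q] power_add by (simp add: mult_ac del: power_int_of_nat) simp
  have eA: "int (k+m) + (int (k+m) - int (k+n)) = (2*int k - int (k+n)) + 2*int m" by simp
  have eQ: "int (k+m) + (int k ^ 2 - 2 * int (k+n) * int (k+m)) + int d ^ 2
     = int k + (- 4 * int k * int (k+n) + 2 * int k ^ 2 + int (k+n) ^ 2)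
          + (2 - 2 * int (k+n)) * int m + (int m * (int m - 1) - 2 * int n * int m)"
    by (simp add: n power2_eq_square algebra_simps)
  show ?thesis by (simp only: L R pq pa eA eQ)
qed



lemma qfac2_qf: "qfac2 q n = qf (q^2) n"
  by (simp add: qfac2_def qf_def power_mult)

lemma qpoch2_pc: "qpoch2 x q n = pc x (q^2) n"
  by (simp add: qpoch2_def pc_def power_mult)

lemma qf_nz: "\<forall>i\<in>{1..j}. 1 - q ^ (2 * i) \<noteq> (0::'a::field) \<Longrightarrow> m \<le> j \<Longrightarrow> qf (q^2) m \<noteq> 0"
  by (auto simp: qf_def power_mult[symmetric])

lemma pc_neg:
  fixes q :: "'a::field"
  assumes q: "q \<noteq> 0" and nz: "\<forall>i\<in>{1..n}. 1 - q ^ (2 * i) \<noteq> 0" and mn: "m \<le> n"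
  shows "pc (power_int q (- 2 * int n)) (q^2) m * qf (q^2) (n - m)
       = (-1) ^ m * power_int q (int m * (int m - 1) - 2 * int n * int m) * qf (q^2) n"
  using mn
proof (induction m)
  case 0 then show ?case by simp
next
  case (Suc m)
  have mn: "m < n" using Suc.prems by simp
  have f: "qf (q^2) (n - m) = qf (q^2) (n - Suc m) * (1 - (q^2) ^ (n - m))"
    using mn by (metis Suc_diff_Suc qf_Suc)
  have nz1: "1 - (q^2) ^ (n - m) \<noteq> 0" using nz mn by (auto simp: power_mult[symmetric])
  have p1: "power_int q (- 2 * int n) * (q^2) ^ m = power_int q (2 * int m - 2 * int n)"
  proof -
    have "(q^2) ^ m = power_int q (2 * int m)"
      by (metis of_nat_mult of_nat_numeral power_int_of_nat power_mult)
    then show ?thesis using q by (simp add: power_int_add[symmetric])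
  qed
  have p2: "power_int q (2 * int m - 2 * int n) * (q^2) ^ (n - m) = 1"
  proof -
    have "(q^2) ^ (n - m) = power_int q (2 * int (n - m))"
      by (metis of_nat_mult of_nat_numeral power_int_of_nat power_mult)
    then show ?thesis using q mn by (simp add: power_int_add[symmetric] of_nat_diff)
  qed
  have p3: "power_int q (int m * (int m - 1) - 2 * int n * int m) * power_int q (2 * int m - 2 * int n)
     = power_int q (int (Suc m) * (int (Suc m) - 1) - 2 * int n * int (Suc m))"
    using q by (simp add: power_int_add[symmetric] algebra_simps)
  define P where "P = power_int q (2 * int m - 2 * int n)"
  have "pc (power_int q (- 2 * int n)) (q^2) (Suc m) * qf (q^2) (n - Suc m) * (1 - (q^2) ^ (n - m))
      = (pc (power_int q (- 2 * int n)) (q^2) m * qf (q^2) (n - m)) * (1 - P)"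
    unfolding pc_Suc f P_def p1 by (simp add: mult_ac)
  also have "\<dots> = (-1) ^ m * power_int q (int m * (int m - 1) - 2 * int n * int m) * qf (q^2) n * (1 - P)"
    using Suc.IH mn by simp
  also have "1 - P = - P * (1 - (q^2) ^ (n - m))"
    using p2 unfolding P_def by (simp add: algebra_simps)
  finally have "pc (power_int q (- 2 * int n)) (q^2) (Suc m) * qf (q^2) (n - Suc m) * (1 - (q^2) ^ (n - m))
      = ((-1) ^ Suc m * (power_int q (int m * (int m - 1) - 2 * int n * int m) * P) * qf (q^2) n) * (1 - (q^2) ^ (n - m))"
    by (simp add: mult_ac)
  then have "pc (power_int q (- 2 * int n)) (q^2) (Suc m) * qf (q^2) (n - Suc m)
      = (-1) ^ Suc m * (power_int q (int m * (int m - 1) - 2 * int n * int m) * P) * qf (q^2) n"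
    using nz1 mult_right_cancel by blast
  then show ?case unfolding P_def p3 .
qed



theorem mainTheorem8:
  fixes a q :: "'a::field" and j k :: nat
  assumes "a \<noteq> 0" and "q \<noteq> 0"
    and "\<forall>i\<in>{1..j}. 1 - q ^ (2 * i) \<noteq> 0"
    and "k \<le> j"
  shows "(\<Sum>h=k..j. (-q) ^ h * a ^ h * power_int q (int k ^ 2 - 2 * int j * int h)
            * qbinp q h k * power_int a (int h - int j) * q ^ ((j - h) ^ 2) * qbinp q j h
            * qpoch2 (a ^ 2 * power_int q (2 - 2 * int j)) q (j - h) / qfac2 q (j - h))
       = (-q) ^ k * power_int a (2 * int k - int j)
           * power_int q (- 4 * int k * int j + 2 * int k ^ 2 + int j ^ 2) * qbinp q j k
           * qpoch2 (a ^ 2 * power_int q (2 - 4 * int j + 2 * int k)) q (j - k) / qfac2 q (j - k)"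
proof -
  note a = assms(1) and q = assms(2) and nz = assms(3)
  obtain n where j: "j = k + n" using assms(4) le_Suc_ex by blast
  define Q where "Q = q^2"
  define x where "x = a ^ 2 * power_int q (2 - 2 * int j)"
  have qfnz: "m \<le> j \<Longrightarrow> qf Q m \<noteq> 0" for m using qf_nz[OF nz] unfolding Q_def .
  have nzn: "\<forall>i\<in>{1..n}. 1 - q ^ (2 * i) \<noteq> 0" using nz j by auto
  have qb: "qbinp q N K = qf Q N / (qf Q K * qf Q (N - K))" for N K
    unfolding qbinp_def qfac2_qf Q_def ..
  have gbq: "gb Q n m = qf Q n / (qf Q m * qf Q (n - m))" if "m \<le> n" for m
    using gb_qf[OF that, of Q] qfnz[of m] qfnz[of "n-m"] that j
    by (simp add: field_simps)
  have y: "a ^ 2 * power_int q (2 - 4 * int j + 2 * int k) = power_int q (- 2 * int n) * x"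
    unfolding x_def using q j by (simp add: power_int_add[symmetric] algebra_simps)
  define C where "C = (-q) ^ k * power_int a (2 * int k - int j)
           * power_int q (- 4 * int k * int j + 2 * int k ^ 2 + int j ^ 2) * qbinp q j k / qf Q n"
  define e where "e m = power_int q (int m * (int m - 1) - 2 * int n * int m)" for m
  have trm: "(-q) ^ (k+m) * a ^ (k+m) * power_int q (int k ^ 2 - 2 * int j * int (k+m))
            * qbinp q (k+m) k * power_int a (int (k+m) - int j) * q ^ ((j - (k+m)) ^ 2) * qbinp q j (k+m)
            * qpoch2 x q (j - (k+m)) / qfac2 q (j - (k+m))
        = C * (gb Q n m * x ^ m * pc (power_int q (- 2 * int n)) Q m * pc x Q (n - m))"
    if mn: "m \<le> n" for m
  proof -
    have pcn: "pc (power_int q (- 2 * int n)) Q m = (-1) ^ m * e m * qf Q n / qf Q (n - m)"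
      using pc_neg[OF q nzn mn] qfnz[of "n - m"] j unfolding Q_def e_def
      by (simp add: field_simps)
    have bin: "qbinp q (k+m) k * qbinp q j (k+m) = qbinp q j k * gb Q n m"
      unfolding qb gbq[OF mn] using qfnz[of "k+m"] qfnz[of k] qfnz[of m] qfnz[of n] qfnz[of "n-m"] j mn
      by (simp add: field_simps)
    have jm: "j - (k+m) = n - m" using j by simp
    have sc: "(-q) ^ (k+m) * a ^ (k+m) * power_int q (int k ^ 2 - 2 * int j * int (k+m))
          * power_int a (int (k+m) - int j) * q ^ ((n - m) ^ 2)
       = (-q) ^ k * power_int a (2 * int k - int j)
           * power_int q (- 4 * int k * int j + 2 * int k ^ 2 + int j ^ 2)
         * x ^ m * ((-1) ^ m * e m)"
      using scal[OF a q mn, of k] unfolding x_def e_def j by simp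
    have "(-q) ^ (k+m) * a ^ (k+m) * power_int q (int k ^ 2 - 2 * int j * int (k+m))
            * qbinp q (k+m) k * power_int a (int (k+m) - int j) * q ^ ((j - (k+m)) ^ 2) * qbinp q j (k+m)
            * qpoch2 x q (j - (k+m)) / qfac2 q (j - (k+m))
        = ((-q) ^ (k+m) * a ^ (k+m) * power_int q (int k ^ 2 - 2 * int j * int (k+m))
          * power_int a (int (k+m) - int j) * q ^ ((n - m) ^ 2))
          * (qbinp q (k+m) k * qbinp q j (k+m)) * (pc x Q (n - m) / qf Q (n - m))"
      unfolding jm qpoch2_pc qfac2_qf Q_def by (simp add: mult_ac)
    also have "\<dots> = C * (gb Q n m * x ^ m * pc (power_int q (- 2 * int n)) Q m * pc x Q (n - m))"
      unfolding sc bin pcn C_def using qfnz[of n] j by (simp add: field_simps)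
    finally show ?thesis .
  qed
  have shift: "sum f {k..j} = (\<Sum>m=0..n. f (k+m))" for f :: "nat \<Rightarrow> 'a"
    using sum.shift_bounds_cl_nat_ivl[of f 0 k n] j by (simp add: add.commute)
  have "(\<Sum>h=k..j. (-q) ^ h * a ^ h * power_int q (int k ^ 2 - 2 * int j * int h)
            * qbinp q h k * power_int a (int h - int j) * q ^ ((j - h) ^ 2) * qbinp q j h
            * qpoch2 x q (j - h) / qfac2 q (j - h))
      = (\<Sum>m=0..n. (-q) ^ (k+m) * a ^ (k+m) * power_int q (int k ^ 2 - 2 * int j * int (k+m))
            * qbinp q (k+m) k * power_int a (int (k+m) - int j) * q ^ ((j - (k+m)) ^ 2) * qbinp q j (k+m)
            * qpoch2 x q (j - (k+m)) / qfac2 q (j - (k+m)))"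
    by (rule shift)
  also have "\<dots> = (\<Sum>m\<le>n. C * (gb Q n m * x ^ m * pc (power_int q (- 2 * int n)) Q m * pc x Q (n - m)))"
    unfolding atMost_atLeast0 by (rule sum.cong[OF refl], rule trm) simp
  also have "\<dots> = C * pc (power_int q (- 2 * int n) * x) Q n"
    by (simp add: vdm sum_distrib_left mult.assoc)
  also have "\<dots> = (-q) ^ k * power_int a (2 * int k - int j)
           * power_int q (- 4 * int k * int j + 2 * int k ^ 2 + int j ^ 2) * qbinp q j k
           * qpoch2 (a ^ 2 * power_int q (2 - 4 * int j + 2 * int k)) q (j - k) / qfac2 q (j - k)"
    unfolding C_def y qpoch2_pc qfac2_qf Q_def using j by simp
  finally show ?thesis unfolding x_def .
qed

end
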